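(* Let $-\infty<a<b<+\infty$, $m\ge0$, let $D^{max}\phi=-i\sigma_1\phi'+m\sigma_3\phi$ on $H^1((a,b);\mathbb C^2)$, let $\Gamma^1\phi=(\phi^1(a),\phi^1(b))^T$, $\Gamma^2\phi=(i\phi^2(a),-i\phi^2(b))^T$, so that $(\Gamma^1,\Gamma^2,\mathbb C^2)$ is a boundary triple for $D^{max}$, and let $D^0=D^{max}\upharpoonright\ker\Gamma^1$. Then: (i) for $z\in\rho(D^0)$ the induced Krein $\gamma$-field is $\gamma(z):\mathbb C^2\to L^2((a,b);\mathbb C^2)$, $\gamma(z)(\omega^1,\omega^2)^T=\omega^1\eta_{z,1}+\omega^2\eta_{z,2}$; (ii) for $z\in\rho(D^0)$, $\gamma(z)^*\phi=\big(\langle\eta_{z,1}|\phi\rangle,\ \langle\eta_{z,2}|\phi\rangle\big)^T$ for all $\phi\in L^2((a,b);\mathbb C^2)$; (iii) the induced Krein $Q$-function satisfies, for $z\in\rho(D^0)\setminus\{m\}$, $$Q(z)=\frac{-1}{\alpha(z)\sin(k(z)(b-a))}\begin{pmatrix}\cos(k(z)(b-a))&-1\\-1&\cos(k(z)(b-a))\end{pmatrix},$$ and at $z=m$ (when $m\in\rho(D^0)$) $$Q(m)=\frac{-1}{2m(b-a)}\begin{pmatrix}1&-1\\-1&1\end{pmatrix}.$$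
   Context: $\sigma_1=\begin{pmatrix}0&1\\1&0\end{pmatrix}$, $\sigma_3=\operatorname{diag}(1,-1)$, $\phi=(\phi^1,\phi^2)^T$; inner products are antilinear in the first argument. For $z\in\rho(D^0)$, $\gamma(z)=(\Gamma^1\upharpoonright\ker(D^{max}-z))^{-1}$ and $Q(z)=\Gamma^2\gamma(z)$. $k(z)=\sqrt{z^2-m^2}$ with $\arg k(z)\in[0,\pi)$; for $z\ne\pm m$, $\alpha(z)=\frac{z+m}{k(z)}$. For $z\in\rho(D^0)\setminus\{m\}$ (where $\alpha(z)\sin(k(z)(b-a))\ne0$), $\eta_{z,1}(x)=\frac{1}{\sin(k(z)(b-a))}\big(\sin(k(z)(b-x)),\ \frac{i}{\alpha(z)}\cos(k(z)(b-x))\big)^T$, $\eta_{z,2}(x)=\frac{1}{\sin(k(z)(b-a))}\big(\sin(k(z)(x-a)),\ \frac{-i}{\alpha(z)}\cos(k(z)(x-a))\big)^T$; for $m\ne0$, $\eta_{m,1}(x)=\frac{1}{b-a}\big(b-x,\frac{i}{2m}\big)^T$, $\eta_{m,2}(x)=\frac{1}{b-a}\big(x-a,\frac{-i}{2m}\big)^T$. *)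

theory Defs
  imports "HOL-Analysis.Analysis"
begin

text \<open>C^2-valued functions on [a,b] are modelled as functions real => complex * complex;
  only their values on [a,b] matter.\<close>

type_synonym cfun2 = "real \<Rightarrow> complex \<times> complex"

definition L2fun :: "real \<Rightarrow> real \<Rightarrow> (real \<Rightarrow> complex) \<Rightarrow> bool" where
  "L2fun a b g \<longleftrightarrow> set_borel_measurable lborel {a..b} g \<and>
     set_integrable lborel {a..b} (\<lambda>x. (cmod (g x))\<^sup>2)"

definition L2vec :: "real \<Rightarrow> real \<Rightarrow> cfun2 \<Rightarrow> bool" where
  "L2vec a b \<phi> \<longleftrightarrow> L2fun a b (\<lambda>x. fst (\<phi> x)) \<and> L2fun a b (\<lambda>x. snd (\<phi> x))"

definition L2inner :: "real \<Rightarrow> real \<Rightarrow> cfun2 \<Rightarrow> cfun2 \<Rightarrow> complex" where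
  "L2inner a b \<phi> \<psi> = set_lebesgue_integral lborel {a..b}
     (\<lambda>x. cnj (fst (\<phi> x)) * fst (\<psi> x) + cnj (snd (\<phi> x)) * snd (\<psi> x))"

definition L2norm :: "real \<Rightarrow> real \<Rightarrow> cfun2 \<Rightarrow> real" where
  "L2norm a b \<phi> = sqrt (Re (L2inner a b \<phi> \<phi>))"

definition C2inner :: "complex \<times> complex \<Rightarrow> complex \<times> complex \<Rightarrow> complex" where
  "C2inner v w = cnj (fst v) * fst w + cnj (snd v) * snd w"

text \<open>H^1((a,b)) via the absolutely continuous representative:
  g is the (weak) derivative of f, with g in L^2, and f x = f a + int_a^x g on [a,b].\<close>
definition weak_deriv :: "real \<Rightarrow> real \<Rightarrow> (real \<Rightarrow> complex) \<Rightarrow> (real \<Rightarrow> complex) \<Rightarrow> bool" where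
  "weak_deriv a b f g \<longleftrightarrow> L2fun a b g \<and>
     (\<forall>x\<in>{a..b}. f x = f a + set_lebesgue_integral lborel {a..x} g)"

definition H1 :: "real \<Rightarrow> real \<Rightarrow> (real \<Rightarrow> complex) \<Rightarrow> bool" where
  "H1 a b f \<longleftrightarrow> (\<exists>g. weak_deriv a b f g)"

text \<open>Graph of D^max: \<phi> \<in> H^1((a,b);C^2) and D^max \<phi> = \<psi> in L^2 (a.e. on (a,b)),
  where D^max \<phi> = -i \<sigma>_1 \<phi>' + m \<sigma>_3 \<phi>.\<close>
definition Dmax_rel :: "real \<Rightarrow> real \<Rightarrow> real \<Rightarrow> cfun2 \<Rightarrow> cfun2 \<Rightarrow> bool" where
  "Dmax_rel a b m \<phi> \<psi> \<longleftrightarrow> L2vec a b \<psi> \<and> (\<exists>g1 g2.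
     weak_deriv a b (\<lambda>x. fst (\<phi> x)) g1 \<and> weak_deriv a b (\<lambda>x. snd (\<phi> x)) g2 \<and>
     (AE x in lborel. x \<in> {a..b} \<longrightarrow>
        \<psi> x = (- \<i> * g2 x + of_real m * fst (\<phi> x), - \<i> * g1 x - of_real m * snd (\<phi> x))))"

definition Gamma1 :: "real \<Rightarrow> real \<Rightarrow> cfun2 \<Rightarrow> complex \<times> complex" where
  "Gamma1 a b \<phi> = (fst (\<phi> a), fst (\<phi> b))"

definition Gamma2 :: "real \<Rightarrow> real \<Rightarrow> cfun2 \<Rightarrow> complex \<times> complex" where
  "Gamma2 a b \<phi> = (\<i> * snd (\<phi> a), - \<i> * snd (\<phi> b))"

definition D0_rel :: "real \<Rightarrow> real \<Rightarrow> real \<Rightarrow> cfun2 \<Rightarrow> cfun2 \<Rightarrow> bool" where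
  "D0_rel a b m \<phi> \<psi> \<longleftrightarrow> Dmax_rel a b m \<phi> \<psi> \<and> Gamma1 a b \<phi> = (0, 0)"

definition cscale :: "complex \<Rightarrow> cfun2 \<Rightarrow> cfun2" where
  "cscale z \<phi> = (\<lambda>x. (z * fst (\<phi> x), z * snd (\<phi> x)))"

definition cdiff :: "cfun2 \<Rightarrow> cfun2 \<Rightarrow> cfun2" where
  "cdiff \<phi> \<psi> = (\<lambda>x. (fst (\<phi> x) - fst (\<psi> x), snd (\<phi> x) - snd (\<psi> x)))"

definition resolvent_D0 :: "real \<Rightarrow> real \<Rightarrow> real \<Rightarrow> complex set" where
  "resolvent_D0 a b m = {z.
     (\<forall>\<psi>. L2vec a b \<psi> \<longrightarrow> (\<exists>\<phi> \<theta>. D0_rel a b m \<phi> \<theta> \<and>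
          (AE x in lborel. x \<in> {a..b} \<longrightarrow> cdiff \<theta> (cscale z \<phi>) x = \<psi> x))) \<and>
     (\<exists>C. \<forall>\<phi> \<theta>. D0_rel a b m \<phi> \<theta> \<longrightarrow>
          L2norm a b \<phi> \<le> C * L2norm a b (cdiff \<theta> (cscale z \<phi>)))}"

text \<open>Krein \<gamma>-field: inverse of \<Gamma>^1 restricted to ker(D^max - z).\<close>
definition gamma_field :: "real \<Rightarrow> real \<Rightarrow> real \<Rightarrow> complex \<Rightarrow> complex \<times> complex \<Rightarrow> cfun2" where
  "gamma_field a b m z \<omega> = (SOME \<phi>. Dmax_rel a b m \<phi> (cscale z \<phi>) \<and> Gamma1 a b \<phi> = \<omega>)"

definition gamma_adj :: "real \<Rightarrow> real \<Rightarrow> real \<Rightarrow> complex \<Rightarrow> cfun2 \<Rightarrow> complex \<times> complex" where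
  "gamma_adj a b m z \<phi> = (SOME v. \<forall>\<omega>. C2inner v \<omega> = L2inner a b \<phi> (gamma_field a b m z \<omega>))"

definition Qfun :: "real \<Rightarrow> real \<Rightarrow> real \<Rightarrow> complex \<Rightarrow> complex \<times> complex \<Rightarrow> complex \<times> complex" where
  "Qfun a b m z \<omega> = Gamma2 a b (gamma_field a b m z \<omega>)"

text \<open>k(z) = sqrt(z^2 - m^2) with arg in [0,pi) (Arg 0 = 0 in Isabelle).\<close>
definition kfun :: "real \<Rightarrow> complex \<Rightarrow> complex" where
  "kfun m z = (THE w. w\<^sup>2 = z\<^sup>2 - (of_real m)\<^sup>2 \<and> 0 \<le> Arg w \<and> Arg w < pi)"

definition alpha :: "real \<Rightarrow> complex \<Rightarrow> complex" where
  "alpha m z = (z + of_real m) / kfun m z"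

definition eta1 :: "real \<Rightarrow> real \<Rightarrow> real \<Rightarrow> complex \<Rightarrow> cfun2" where
  "eta1 a b m z = (if z = of_real m then
     (\<lambda>x. (of_real ((b - x) / (b - a)), \<i> / (2 * of_real m) / of_real (b - a)))
   else
     (\<lambda>x. (sin (kfun m z * of_real (b - x)) / sin (kfun m z * of_real (b - a)),
           (\<i> / alpha m z) * cos (kfun m z * of_real (b - x)) / sin (kfun m z * of_real (b - a)))))"

definition eta2 :: "real \<Rightarrow> real \<Rightarrow> real \<Rightarrow> complex \<Rightarrow> cfun2" where
  "eta2 a b m z = (if z = of_real m then
     (\<lambda>x. (of_real ((x - a) / (b - a)), - \<i> / (2 * of_real m) / of_real (b - a)))
   else
     (\<lambda>x. (sin (kfun m z * of_real (x - a)) / sin (kfun m z * of_real (b - a)),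
           (- \<i> / alpha m z) * cos (kfun m z * of_real (x - a)) / sin (kfun m z * of_real (b - a)))))"

end

theory Submission
  imports Defs
begin

lemma L2fun_cont:
  assumes "continuous_on {a..b} h"
  shows "L2fun a b h"
  unfolding L2fun_def set_borel_measurable_def
proof
  show "(\<lambda>x. indicator {a..b} x *\<^sub>R h x) \<in> borel_measurable lborel"
    using borel_measurable_continuous_on_indicator[OF _ assms] by simp
  have "continuous_on {a..b} (\<lambda>x. (cmod (h x))\<^sup>2)"
    by (intro continuous_intros assms)
  then show "set_integrable lborel {a..b} (\<lambda>x. (cmod (h x))\<^sup>2)"
    by (rule borel_integrable_atLeastAtMost')
qed

lemma L2fun_L1:
  assumes "L2fun a b g"
  shows "set_integrable lborel {a..b} g"
proof -
  have m: "(\<lambda>x. indicator {a..b} x *\<^sub>R g x) \<in> borel_measurable lborel"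
    using assms unfolding L2fun_def set_borel_measurable_def by blast
  have i1: "set_integrable lborel {a..b} (\<lambda>x. 1::real)"
    by (rule borel_integrable_atLeastAtMost') simp
  have "set_integrable lborel {a..b} (\<lambda>x. 1 + (cmod (g x))\<^sup>2)"
    using set_integral_add(1)[OF i1, of "\<lambda>x. (cmod (g x))\<^sup>2"] assms
    unfolding L2fun_def by simp
  then have "integrable lborel (\<lambda>x. indicator {a..b} x *\<^sub>R (1 + (cmod (g x))\<^sup>2))"
    unfolding set_integrable_def .
  then show ?thesis unfolding set_integrable_def
  proof (rule Bochner_Integration.integrable_bound[OF _ m])
    have le: "x \<le> 1 + x\<^sup>2" for x :: real
    proof (cases "x \<le> 1")
      case True then show ?thesis using zero_le_power2[of x] by linarith
    next
      case False then have "x \<le> x * x" using mult_right_mono[of 1 x x] by simp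
      then show ?thesis by (simp add: power2_eq_square)
    qed
    show "AE x in lborel. norm (indicator {a..b} x *\<^sub>R g x) \<le> norm (indicator {a..b} x *\<^sub>R (1 + (cmod (g x))\<^sup>2))"
      using le by (intro AE_I2) (simp split: split_indicator)
  qed
qed

lemma weak_deriv_cont:
  assumes "weak_deriv a b f g"
  shows "continuous_on {a..b} f"
proof -
  have gi: "set_integrable lborel {a..b} g" using assms L2fun_L1 unfolding weak_deriv_def by blast
  have "g integrable_on {a..b}" using set_borel_integral_eq_integral(1)[OF gi] .
  then have c: "continuous_on {a..b} (\<lambda>x. f a + integral {a..x} g)"
    by (intro continuous_intros indefinite_integral_continuous_1)
  have "f x = f a + integral {a..x} g" if "x \<in> {a..b}" for x
  proof -
    have "set_integrable lborel {a..x} g"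
      by (rule set_integrable_subset[OF gi]) (use that in auto)
    then show ?thesis using assms that unfolding weak_deriv_def
      using set_borel_integral_eq_integral(2) by metis
  qed
  then show ?thesis using continuous_on_eq[OF c] by metis
qed


lemma kfun_sq: "(kfun m z)\<^sup>2 = z\<^sup>2 - (of_real m)\<^sup>2"
proof -
  define c where "c = z\<^sup>2 - (of_real m)\<^sup>2"
  let ?P = "\<lambda>w. w\<^sup>2 = c \<and> 0 \<le> Arg w \<and> Arg w < pi"
  have ex: "\<exists>w. ?P w"
  proof (cases "0 \<le> Arg (csqrt c) \<and> Arg (csqrt c) < pi")
    case True then show ?thesis by (intro exI[of _ "csqrt c"]) simp
  next
    case False
    have nz: "csqrt c \<noteq> 0" using False by (auto simp: Arg_zero)
    have b: "- pi < Arg (csqrt c) \<and> Arg (csqrt c) \<le> pi" by (rule Arg_bounded)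
    have "0 \<le> Arg (- csqrt c) \<and> Arg (- csqrt c) < pi"
      using Arg_minus[OF nz] False b by auto
    then show ?thesis by (intro exI[of _ "- csqrt c"]) simp
  qed
  have un: "v = w" if "?P v" "?P w" for v w
  proof -
    have "(v - w) * (v + w) = 0" using that by (simp add: algebra_simps power2_eq_square)
    then have "v = w \<or> v = - w" by (auto simp: add_eq_0_iff)
    moreover have False if "v = - w" "w \<noteq> 0"
    proof -
      have b: "- pi < Arg w \<and> Arg w \<le> pi" by (rule Arg_bounded)
      show False using Arg_minus[OF \<open>w \<noteq> 0\<close>] \<open>?P v\<close> \<open>?P w\<close> \<open>v = - w\<close> b
        by (auto split: if_splits)
    qed
    ultimately show ?thesis by force
  qed
  have "\<exists>!w. ?P w" using ex un by blast
  from theI'[OF this] show ?thesis unfolding kfun_def c_def by blast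
qed


lemma weak_deriv_FTC:
  fixes f f' :: "real \<Rightarrow> complex"
  assumes "a \<le> b"
    and d: "\<And>x. (f has_vector_derivative f' x) (at x)"
    and c: "continuous_on {a..b} f'"
  shows "weak_deriv a b f f'"
  unfolding weak_deriv_def
proof (intro conjI ballI)
  show "L2fun a b f'" using c by (rule L2fun_cont)
  fix x assume x: "x \<in> {a..b}"
  have ax: "a \<le> x" and sub: "{a..x} \<subseteq> {a..b}" using x by auto
  have "integral\<^sup>L lborel (\<lambda>t. indicator {a .. x} t *\<^sub>R f' t) = f x - f a"
  proof (rule integral_FTC_atLeastAtMost[OF ax])
    fix t show "(f has_vector_derivative f' t) (at t within {a..x})"
      using d by (rule has_vector_derivative_at_within)
  next
    show "continuous_on {a..x} f'" using c sub by (rule continuous_on_subset)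
  qed
  then show "f x = f a + set_lebesgue_integral lborel {a..x} f'"
    unfolding set_lebesgue_integral_def by simp
qed


lemma L2fun_diff:
  assumes u: "L2fun a b u" and v: "L2fun a b v"
  shows "L2fun a b (\<lambda>x. u x - v x)"
proof -
  have mu: "(\<lambda>x. indicator {a..b} x *\<^sub>R u x) \<in> borel_measurable lborel"
    and mv: "(\<lambda>x. indicator {a..b} x *\<^sub>R v x) \<in> borel_measurable lborel"
    using u v unfolding L2fun_def set_borel_measurable_def by blast+
  have eq: "(\<lambda>x. indicator {a..b} x *\<^sub>R (u x - v x)) =
      (\<lambda>x. indicator {a..b} x *\<^sub>R u x - indicator {a..b} x *\<^sub>R v x)"
    by (rule ext) (simp split: split_indicator)
  have m: "(\<lambda>x. indicator {a..b} x *\<^sub>R (u x - v x)) \<in> borel_measurable lborel"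
    unfolding eq using mu mv by (rule borel_measurable_diff)
  have eq2: "(\<lambda>x. indicator {a..b} x *\<^sub>R (cmod (u x - v x))\<^sup>2) =
      (\<lambda>x. (cmod (indicator {a..b} x *\<^sub>R (u x - v x)))\<^sup>2)"
    by (rule ext) (simp split: split_indicator)
  have m2: "set_borel_measurable lborel {a..b} (\<lambda>x. (cmod (u x - v x))\<^sup>2)"
    unfolding set_borel_measurable_def eq2 using m by measurable
  have i: "set_integrable lborel {a..b} (\<lambda>x. 2 * (cmod (u x))\<^sup>2 + 2 * (cmod (v x))\<^sup>2)"
    using u v unfolding L2fun_def by (intro set_integral_add(1) set_integrable_mult_right) auto
  have bnd: "(cmod (p - q))\<^sup>2 \<le> 2 * (cmod p)\<^sup>2 + 2 * (cmod q)\<^sup>2" for p q :: complex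
  proof -
    have "cmod (p - q) \<le> cmod p + cmod q" by (rule norm_triangle_ineq4)
    then have "(cmod (p - q))\<^sup>2 \<le> (cmod p + cmod q)\<^sup>2" by (intro power_mono) auto
    also have "\<dots> \<le> 2 * (cmod p)\<^sup>2 + 2 * (cmod q)\<^sup>2"
      using zero_le_power2[of "cmod p - cmod q"] by (simp add: power2_eq_square algebra_simps)
    finally show ?thesis .
  qed
  have "set_integrable lborel {a..b} (\<lambda>x. (cmod (u x - v x))\<^sup>2)"
    by (rule set_integrable_bound[OF i m2]) (use bnd in auto)
  then show ?thesis using m unfolding L2fun_def set_borel_measurable_def by blast
qed


lemma L1_sub:
  assumes "L2fun a b g" "x \<in> {a..b}"
  shows "set_integrable lborel {a..x} g"
  by (rule set_integrable_subset[OF L2fun_L1[OF assms(1)]]) (use assms(2) in auto)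

lemma weak_deriv_diff:
  assumes 1: "weak_deriv a b f1 g1" and 2: "weak_deriv a b f2 g2"
  shows "weak_deriv a b (\<lambda>x. f1 x - f2 x) (\<lambda>x. g1 x - g2 x)"
  unfolding weak_deriv_def
proof (intro conjI ballI)
  show "L2fun a b (\<lambda>x. g1 x - g2 x)" using 1 2 unfolding weak_deriv_def by (intro L2fun_diff) auto
  fix x assume x: "x \<in> {a..b}"
  have i1: "set_integrable lborel {a..x} g1"
    using 1 x unfolding weak_deriv_def by (intro L1_sub) auto
  have i2: "set_integrable lborel {a..x} g2"
    using 2 x unfolding weak_deriv_def by (intro L1_sub) auto
  show "f1 x - f2 x = f1 a - f2 a + set_lebesgue_integral lborel {a..x} (\<lambda>x. g1 x - g2 x)"
  proof -
    have e1: "f1 x = f1 a + set_lebesgue_integral lborel {a..x} g1"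
      using 1 x unfolding weak_deriv_def by blast
    have e2: "f2 x = f2 a + set_lebesgue_integral lborel {a..x} g2"
      using 2 x unfolding weak_deriv_def by blast
    show ?thesis unfolding set_integral_diff(2)[OF i1 i2] e1 e2 by (simp add: algebra_simps)
  qed
qed


lemma Dmax_cont:
  assumes "Dmax_rel a b m \<phi> \<psi>"
  shows "continuous_on {a..b} (\<lambda>x. fst (\<phi> x))" "continuous_on {a..b} (\<lambda>x. snd (\<phi> x))"
  using assms weak_deriv_cont unfolding Dmax_rel_def by blast+

lemma kernel_diff:
  assumes A: "Dmax_rel a b m \<phi>1 (cscale z \<phi>1)" and B: "Dmax_rel a b m \<phi>2 (cscale z \<phi>2)"
  shows "Dmax_rel a b m (cdiff \<phi>1 \<phi>2) (cscale z (cdiff \<phi>1 \<phi>2))"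
proof -
  obtain g1 g2 where g1: "weak_deriv a b (\<lambda>x. fst (\<phi>1 x)) g1" and g2: "weak_deriv a b (\<lambda>x. snd (\<phi>1 x)) g2"
    and ae1: "AE x in lborel. x \<in> {a..b} \<longrightarrow>
        cscale z \<phi>1 x = (- \<i> * g2 x + of_real m * fst (\<phi>1 x), - \<i> * g1 x - of_real m * snd (\<phi>1 x))"
    using A unfolding Dmax_rel_def by blast
  obtain h1 h2 where h1: "weak_deriv a b (\<lambda>x. fst (\<phi>2 x)) h1" and h2: "weak_deriv a b (\<lambda>x. snd (\<phi>2 x)) h2"
    and ae2: "AE x in lborel. x \<in> {a..b} \<longrightarrow>
        cscale z \<phi>2 x = (- \<i> * h2 x + of_real m * fst (\<phi>2 x), - \<i> * h1 x - of_real m * snd (\<phi>2 x))"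
    using B unfolding Dmax_rel_def by blast
  have c1: "continuous_on {a..b} (\<lambda>x. fst (\<phi>1 x))" "continuous_on {a..b} (\<lambda>x. snd (\<phi>1 x))"
    using Dmax_cont[OF A] by auto
  have c2: "continuous_on {a..b} (\<lambda>x. fst (\<phi>2 x))" "continuous_on {a..b} (\<lambda>x. snd (\<phi>2 x))"
    using Dmax_cont[OF B] by auto
  have L: "L2vec a b (cscale z (cdiff \<phi>1 \<phi>2))"
    unfolding L2vec_def cscale_def cdiff_def fst_conv snd_conv
    by (intro conjI L2fun_cont continuous_intros c1 c2)
  have w1: "weak_deriv a b (\<lambda>x. fst (cdiff \<phi>1 \<phi>2 x)) (\<lambda>x. g1 x - h1 x)"
    unfolding cdiff_def fst_conv by (rule weak_deriv_diff[OF g1 h1])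
  have w2: "weak_deriv a b (\<lambda>x. snd (cdiff \<phi>1 \<phi>2 x)) (\<lambda>x. g2 x - h2 x)"
    unfolding cdiff_def snd_conv by (rule weak_deriv_diff[OF g2 h2])
  have ae: "AE x in lborel. x \<in> {a..b} \<longrightarrow>
        cscale z (cdiff \<phi>1 \<phi>2) x = (- \<i> * (g2 x - h2 x) + of_real m * fst (cdiff \<phi>1 \<phi>2 x),
            - \<i> * (g1 x - h1 x) - of_real m * snd (cdiff \<phi>1 \<phi>2 x))"
    using ae1 ae2
  proof eventually_elim
    case (elim x)
    show ?case
    proof
      assume x: "x \<in> {a..b}"
      then have e1: "z * fst (\<phi>1 x) = - \<i> * g2 x + of_real m * fst (\<phi>1 x)"
          "z * snd (\<phi>1 x) = - \<i> * g1 x - of_real m * snd (\<phi>1 x)"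
        and e2: "z * fst (\<phi>2 x) = - \<i> * h2 x + of_real m * fst (\<phi>2 x)"
          "z * snd (\<phi>2 x) = - \<i> * h1 x - of_real m * snd (\<phi>2 x)"
        using elim by (auto simp: cscale_def)
      show "cscale z (cdiff \<phi>1 \<phi>2) x = (- \<i> * (g2 x - h2 x) + of_real m * fst (cdiff \<phi>1 \<phi>2 x),
            - \<i> * (g1 x - h1 x) - of_real m * snd (cdiff \<phi>1 \<phi>2 x))"
      proof -
        have p1: "z * (fst (\<phi>1 x) - fst (\<phi>2 x)) = - \<i> * (g2 x - h2 x) + of_real m * (fst (\<phi>1 x) - fst (\<phi>2 x))"
        proof -
          have "z * (fst (\<phi>1 x) - fst (\<phi>2 x)) = z * fst (\<phi>1 x) - z * fst (\<phi>2 x)"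
            by (simp add: right_diff_distrib)
          also have "\<dots> = (- \<i> * g2 x + of_real m * fst (\<phi>1 x)) - (- \<i> * h2 x + of_real m * fst (\<phi>2 x))"
            by (simp only: e1 e2)
          finally show ?thesis by (simp add: algebra_simps)
        qed
        have p2: "z * (snd (\<phi>1 x) - snd (\<phi>2 x)) = - \<i> * (g1 x - h1 x) - of_real m * (snd (\<phi>1 x) - snd (\<phi>2 x))"
        proof -
          have "z * (snd (\<phi>1 x) - snd (\<phi>2 x)) = z * snd (\<phi>1 x) - z * snd (\<phi>2 x)"
            by (simp add: right_diff_distrib)
          also have "\<dots> = (- \<i> * g1 x - of_real m * snd (\<phi>1 x)) - (- \<i> * h1 x - of_real m * snd (\<phi>2 x))"
            by (simp only: e1 e2)
          finally show ?thesis by (simp add: algebra_simps)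
        qed
        show ?thesis unfolding cscale_def cdiff_def fst_conv snd_conv using p1 p2 by simp
      qed
    qed
  qed
  show ?thesis unfolding Dmax_rel_def using L w1 w2 ae by blast
qed

lemma zero_kernel:
  assumes z: "z \<in> resolvent_D0 a b m" and ab: "a < b"
    and K: "Dmax_rel a b m \<delta> (cscale z \<delta>)" and G: "Gamma1 a b \<delta> = (0, 0)"
    and x: "x \<in> {a..b}"
  shows "\<delta> x = (0, 0)"
proof -
  obtain C where C: "\<And>\<phi> \<theta>. D0_rel a b m \<phi> \<theta> \<Longrightarrow>
          L2norm a b \<phi> \<le> C * L2norm a b (cdiff \<theta> (cscale z \<phi>))"
    using z unfolding resolvent_D0_def by blast
  have "L2norm a b \<delta> \<le> C * L2norm a b (cdiff (cscale z \<delta>) (cscale z \<delta>))"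
    using C K G unfolding D0_rel_def by blast
  also have "cdiff (cscale z \<delta>) (cscale z \<delta>) = (\<lambda>x. (0, 0))"
    by (rule ext) (simp add: cdiff_def)
  also have "L2norm a b (\<lambda>x. (0, 0)) = 0"
    by (simp add: L2norm_def L2inner_def)
  finally have le: "L2norm a b \<delta> \<le> 0" by simp
  define h where "h x = (cmod (fst (\<delta> x)))\<^sup>2 + (cmod (snd (\<delta> x)))\<^sup>2" for x
  have hc: "continuous_on {a..b} h"
    unfolding h_def using Dmax_cont[OF K] by (intro continuous_on_add continuous_on_power continuous_on_norm) auto
  have hi: "set_integrable lborel {a..b} h" using hc by (rule borel_integrable_atLeastAtMost')
  have "(\<lambda>x. cnj (fst (\<delta> x)) * fst (\<delta> x) + cnj (snd (\<delta> x)) * snd (\<delta> x)) = (\<lambda>x. complex_of_real (h x))"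
    by (rule ext) (simp only: h_def of_real_add complex_norm_square, simp add: ac_simps)
  then have "L2inner a b \<delta> \<delta> = of_real (set_lebesgue_integral lborel {a..b} h)"
    unfolding L2inner_def by (simp add: set_integral_complex_of_real)
  then have "sqrt (set_lebesgue_integral lborel {a..b} h) \<le> 0"
    using le unfolding L2norm_def by simp
  then have I0: "set_lebesgue_integral lborel {a..b} h \<le> 0" by simp
  have I: "set_lebesgue_integral lborel {a..b} h = integral {a..b} h"
    by (rule set_borel_integral_eq_integral(2)[OF hi])
  have hnn: "\<And>x. 0 \<le> h x" unfolding h_def by simp
  have "integral {a..b} h \<ge> 0"
    using hnn by (intro integral_nonneg set_borel_integral_eq_integral(1)[OF hi]) auto
  then have "integral (cbox a b) h = 0" using I0 I by simp
  then have "\<forall>x\<in>cbox a b. h x = 0"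
    using integral_cbox_eq_0_iff[of a b h] hc hnn ab by simp
  then have "h x = 0" using x by simp
  then show ?thesis unfolding h_def
    by (metis add_nonneg_eq_0_iff norm_eq_zero prod.collapse zero_le_power2 power_eq_0_iff zero_less_numeral less_numeral_extra(3))
qed


definition Phi :: "real \<Rightarrow> real \<Rightarrow> complex \<Rightarrow> complex \<Rightarrow> complex \<Rightarrow> complex \<Rightarrow> cfun2" where
  "Phi a b k al c1 c2 = (\<lambda>x. (c1 * sin (k * of_real (b - x)) + c2 * sin (k * of_real (x - a)),
      (\<i> / al) * (c1 * cos (k * of_real (b - x)) - c2 * cos (k * of_real (x - a)))))"

lemma Phi_kernel:
  assumes ab: "a < b" and k2: "k\<^sup>2 = z\<^sup>2 - (of_real m)\<^sup>2" and k0: "k \<noteq> 0" and zm: "z + of_real m \<noteq> 0"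
    and al: "al = (z + of_real m) / k"
  shows "Dmax_rel a b m (Phi a b k al c1 c2) (cscale z (Phi a b k al c1 c2))"
proof -
  define A B where "A = (of_real a :: complex)" and "B = (of_real b :: complex)"
  define P1 where "P1 w = c1 * sin (k * (B - w)) + c2 * sin (k * (w - A))" for w
  define P1' where "P1' w = - c1 * k * cos (k * (B - w)) + c2 * k * cos (k * (w - A))" for w
  define P2 where "P2 w = (\<i> / al) * (c1 * cos (k * (B - w)) - c2 * cos (k * (w - A)))" for w
  define P2' where "P2' w = (\<i> / al) * (c1 * k * sin (k * (B - w)) + c2 * k * sin (k * (w - A)))" for w
  have al0: "al \<noteq> 0" using k0 zm al by simp
  have d1: "(P1 has_field_derivative P1' w) (at w)" for w
    unfolding P1_def P1'_def by (rule derivative_eq_intros refl | simp)+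
  have d2: "(P2 has_field_derivative P2' w) (at w)" for w
    unfolding P2_def P2'_def by (rule derivative_eq_intros refl | simp add: algebra_simps)+
  have f1: "(\<lambda>x. fst (Phi a b k al c1 c2 x)) = (\<lambda>x. P1 (of_real x))"
    by (rule ext) (simp add: Phi_def P1_def A_def B_def)
  have f2: "(\<lambda>x. snd (Phi a b k al c1 c2 x)) = (\<lambda>x. P2 (of_real x))"
    by (rule ext) (simp add: Phi_def P2_def A_def B_def)
  have w1: "weak_deriv a b (\<lambda>x. fst (Phi a b k al c1 c2 x)) (\<lambda>x. P1' (of_real x))"
    unfolding f1 using ab
    by (intro weak_deriv_FTC has_vector_derivative_real_field d1)
       (auto simp: P1'_def intro!: continuous_intros)
  have w2: "weak_deriv a b (\<lambda>x. snd (Phi a b k al c1 c2 x)) (\<lambda>x. P2' (of_real x))"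
    unfolding f2 using ab al0
    by (intro weak_deriv_FTC has_vector_derivative_real_field d2)
       (auto simp: P2'_def intro!: continuous_intros)
  have L: "L2vec a b (cscale z (Phi a b k al c1 c2))"
    unfolding L2vec_def cscale_def Phi_def fst_conv snd_conv
    by (intro conjI L2fun_cont continuous_intros)
  have kal: "k / al = z - of_real m"
  proof -
    have "k / al = k * k / (z + of_real m)" using k0 zm by (simp add: al field_simps)
    also have "k * k = (z - of_real m) * (z + of_real m)" using k2 by (simp add: power2_eq_square algebra_simps)
    finally show ?thesis using zm by simp
  qed
  have zal: "(z + of_real m) * (\<i> / al) = \<i> * k" using k0 zm by (simp add: al field_simps)
  have eq: "cscale z (Phi a b k al c1 c2) x = (- \<i> * P2' (of_real x) + of_real m * fst (Phi a b k al c1 c2 x),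
            - \<i> * P1' (of_real x) - of_real m * snd (Phi a b k al c1 c2 x))" for x
  proof -
    have e1: "z * P1 w = - \<i> * P2' w + of_real m * P1 w" for w
    proof -
      have "- \<i> * P2' w = (k / al) * P1 w" unfolding P2'_def P1_def by (simp add: algebra_simps)
      then show ?thesis unfolding kal by (simp add: algebra_simps)
    qed
    have e2: "z * P2 w = - \<i> * P1' w - of_real m * P2 w" for w
    proof -
      have "(z + of_real m) * P2 w = \<i> * k * (c1 * cos (k * (B - w)) - c2 * cos (k * (w - A)))"
        unfolding P2_def by (simp only: mult.assoc[symmetric] zal)
      also have "\<dots> = - \<i> * P1' w" unfolding P1'_def by (simp add: algebra_simps)
      finally show ?thesis by (simp add: algebra_simps)
    qed
    show ?thesis using e1[of "of_real x"] e2[of "of_real x"]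
      unfolding cscale_def fun_cong[OF f1] fun_cong[OF f2] by simp
  qed
  show ?thesis unfolding Dmax_rel_def using L w1 w2 eq by (intro conjI exI AE_I2) auto
qed


lemma const_kernel:
  assumes ab: "a < b"
  shows "Dmax_rel a b m (\<lambda>x. (0, 1)) (cscale (- of_real m) (\<lambda>x. (0, 1)))"
proof -
  have w0: "weak_deriv a b (\<lambda>x. c) (\<lambda>x. 0)" for c :: complex
    using ab by (intro weak_deriv_FTC) (auto intro: has_vector_derivative_const)
  have L: "L2vec a b (cscale (- of_real m) (\<lambda>x. (0, 1)))"
    unfolding L2vec_def cscale_def fst_conv snd_conv
    by (intro conjI L2fun_cont continuous_intros)
  show ?thesis unfolding Dmax_rel_def using L w0
    by (intro conjI exI[of _ "\<lambda>x. 0"] AE_I2) (auto simp: cscale_def)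
qed

definition Psi :: "real \<Rightarrow> real \<Rightarrow> real \<Rightarrow> complex \<Rightarrow> complex \<Rightarrow> cfun2" where
  "Psi a b m c1 c2 = (\<lambda>x. (c1 * of_real (b - x) + c2 * of_real (x - a), \<i> * (c1 - c2) / (2 * of_real m)))"

lemma m_kernel:
  assumes ab: "a < b" and m0: "m \<noteq> 0"
  shows "Dmax_rel a b m (Psi a b m c1 c2) (cscale (of_real m) (Psi a b m c1 c2))"
proof -
  define Q where "Q w = c1 * (of_real b - w) + c2 * (w - of_real a)" for w
  have dQ: "(Q has_field_derivative (c2 - c1)) (at w)" for w
    unfolding Q_def by (rule derivative_eq_intros refl | simp add: algebra_simps)+
  have f1: "(\<lambda>x. fst (Psi a b m c1 c2 x)) = (\<lambda>x. Q (of_real x))"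
    by (rule ext) (simp add: Psi_def Q_def)
  have w1: "weak_deriv a b (\<lambda>x. fst (Psi a b m c1 c2 x)) (\<lambda>x. c2 - c1)"
    unfolding f1 using ab
    by (intro weak_deriv_FTC has_vector_derivative_real_field dQ) auto
  have w2: "weak_deriv a b (\<lambda>x. snd (Psi a b m c1 c2 x)) (\<lambda>x. 0)"
    unfolding Psi_def snd_conv using ab by (intro weak_deriv_FTC) (auto intro: has_vector_derivative_const)
  have L: "L2vec a b (cscale (of_real m) (Psi a b m c1 c2))"
    unfolding L2vec_def cscale_def Psi_def fst_conv snd_conv
    by (intro conjI L2fun_cont continuous_intros)
  have e2: "of_real m * (\<i> * (c1 - c2) / (2 * of_real m)) = - \<i> * (c2 - c1) - of_real m * (\<i> * (c1 - c2) / (2 * of_real m))"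
    using m0 by (simp add: field_simps)
  show ?thesis unfolding Dmax_rel_def using L w1 w2 e2
    by (intro conjI exI AE_I2) (auto simp: cscale_def Psi_def)
qed

definition cand :: "real \<Rightarrow> real \<Rightarrow> real \<Rightarrow> complex \<Rightarrow> complex \<times> complex \<Rightarrow> cfun2" where
  "cand a b m z \<omega> = (\<lambda>x. (fst \<omega> * fst (eta1 a b m z x) + snd \<omega> * fst (eta2 a b m z x),
           fst \<omega> * snd (eta1 a b m z x) + snd \<omega> * snd (eta2 a b m z x)))"

lemma res_not_minus:
  assumes z: "z \<in> resolvent_D0 a b m" and ab: "a < b"
  shows "z \<noteq> - of_real m"
proof
  assume zm: "z = - of_real m"
  have "(\<lambda>x::real. (0::complex, 1::complex)) a = (0, 0)"
    by (rule zero_kernel[OF z ab]) (use const_kernel[OF ab, of m] zm ab in \<open>auto simp: Gamma1_def\<close>)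
  then show False by simp
qed

lemma res_facts:
  assumes z: "z \<in> resolvent_D0 a b m" and ab: "a < b" and zm: "z \<noteq> of_real m"
  shows "kfun m z \<noteq> 0" "z + of_real m \<noteq> 0" "sin (kfun m z * of_real (b - a)) \<noteq> 0"
proof -
  show zp: "z + of_real m \<noteq> 0" using res_not_minus[OF z ab] by (auto simp: add_eq_0_iff)
  have "(kfun m z)\<^sup>2 = (z - of_real m) * (z + of_real m)"
    by (subst kfun_sq) (simp add: power2_eq_square algebra_simps)
  then show k0: "kfun m z \<noteq> 0" using zp zm by auto
  show "sin (kfun m z * of_real (b - a)) \<noteq> 0"
  proof
    assume s0: "sin (kfun m z * of_real (b - a)) = 0"
    define al where "al = (z + of_real m) / kfun m z"
    have al0: "al \<noteq> 0" using k0 zp by (simp add: al_def)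
    have K: "Dmax_rel a b m (Phi a b (kfun m z) al 0 1) (cscale z (Phi a b (kfun m z) al 0 1))"
      by (rule Phi_kernel[OF ab kfun_sq k0 zp al_def])
    have G: "Gamma1 a b (Phi a b (kfun m z) al 0 1) = (0, 0)"
      using s0 by (simp add: Gamma1_def Phi_def)
    have "Phi a b (kfun m z) al 0 1 a = (0, 0)"
      by (rule zero_kernel[OF z ab K G]) (use ab in auto)
    then show False using al0 by (simp add: Phi_def)
  qed
qed

lemma cand_ok:
  assumes z: "z \<in> resolvent_D0 a b m" and ab: "a < b"
  shows "Dmax_rel a b m (cand a b m z \<omega>) (cscale z (cand a b m z \<omega>)) \<and> Gamma1 a b (cand a b m z \<omega>) = \<omega>"
proof (cases "z = of_real m")
  case True
  have m0: "m \<noteq> 0" using res_not_minus[OF z ab] True by auto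
  have ba: "complex_of_real (b - a) \<noteq> 0" using ab by simp
  have eq: "cand a b m z \<omega> = Psi a b m (fst \<omega> / of_real (b - a)) (snd \<omega> / of_real (b - a))"
  proof (rule ext)
    fix x
    have D: "complex_of_real (b - a) \<noteq> 0" using ab by simp
    show "cand a b m z \<omega> x = Psi a b m (fst \<omega> / of_real (b - a)) (snd \<omega> / of_real (b - a)) x"
      unfolding cand_def eta1_def eta2_def Psi_def True using D m0
      by (simp only: if_True of_real_divide prod_eq_iff fst_conv snd_conv) (simp add: field_simps del: of_real_diff)
  qed
  have ba2: "complex_of_real b - complex_of_real a \<noteq> 0" using ab by simp
  have K: "Dmax_rel a b m (Psi a b m (fst \<omega> / of_real (b - a)) (snd \<omega> / of_real (b - a)))
     (cscale z (Psi a b m (fst \<omega> / of_real (b - a)) (snd \<omega> / of_real (b - a))))"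
    unfolding True by (rule m_kernel[OF ab m0])
  have G: "Gamma1 a b (Psi a b m (fst \<omega> / of_real (b - a)) (snd \<omega> / of_real (b - a))) = \<omega>"
    using ba ba2 by (simp add: Gamma1_def Psi_def)
  show ?thesis unfolding eq using K G by blast
next
  case False
  note f = res_facts[OF z ab False]
  define s where "s = sin (kfun m z * of_real (b - a))"
  have s0: "s \<noteq> 0" using f(3) by (simp add: s_def)
  have al0: "alpha m z \<noteq> 0" using f(1) f(2) by (simp add: alpha_def)
  have eq: "cand a b m z \<omega> = Phi a b (kfun m z) (alpha m z) (fst \<omega> / s) (snd \<omega> / s)"
    using False s0 al0 by (intro ext) (simp add: cand_def eta1_def eta2_def Phi_def s_def field_simps)
  have K: "Dmax_rel a b m (cand a b m z \<omega>) (cscale z (cand a b m z \<omega>))"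
    unfolding eq by (rule Phi_kernel[OF ab kfun_sq f(1) f(2) alpha_def])
  have G: "Gamma1 a b (cand a b m z \<omega>) = \<omega>"
    unfolding eq using s0 by (simp add: Gamma1_def Phi_def s_def)
  show ?thesis using K G by blast
qed

lemma gamma_field_eq:
  assumes z: "z \<in> resolvent_D0 a b m" and ab: "a < b" and x: "x \<in> {a..b}"
  shows "gamma_field a b m z \<omega> x = cand a b m z \<omega> x"
proof -
  let ?P = "\<lambda>\<phi>. Dmax_rel a b m \<phi> (cscale z \<phi>) \<and> Gamma1 a b \<phi> = \<omega>"
  have "?P (cand a b m z \<omega>)" by (rule cand_ok[OF z ab])
  then have g: "?P (gamma_field a b m z \<omega>)" unfolding gamma_field_def by (rule someI[of ?P])
  have K: "Dmax_rel a b m (cdiff (gamma_field a b m z \<omega>) (cand a b m z \<omega>))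
      (cscale z (cdiff (gamma_field a b m z \<omega>) (cand a b m z \<omega>)))"
    using g cand_ok[OF z ab] by (intro kernel_diff) auto
  have G: "Gamma1 a b (cdiff (gamma_field a b m z \<omega>) (cand a b m z \<omega>)) = (0, 0)"
    using g cand_ok[OF z ab, of \<omega>] by (auto simp: Gamma1_def cdiff_def prod_eq_iff)
  have "cdiff (gamma_field a b m z \<omega>) (cand a b m z \<omega>) x = (0, 0)"
    by (rule zero_kernel[OF z ab K G x])
  then show ?thesis by (simp add: cdiff_def prod_eq_iff)
qed


lemma eta_cont:
  assumes z: "z \<in> resolvent_D0 a b m" and ab: "a < b"
  shows "continuous_on {a..b} (\<lambda>x. fst (eta1 a b m z x))" "continuous_on {a..b} (\<lambda>x. snd (eta1 a b m z x))"
    "continuous_on {a..b} (\<lambda>x. fst (eta2 a b m z x))" "continuous_on {a..b} (\<lambda>x. snd (eta2 a b m z x))"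
proof -
  have c1: "continuous_on {a..b} (\<lambda>x. fst (cand a b m z (1, 0) x))" "continuous_on {a..b} (\<lambda>x. snd (cand a b m z (1, 0) x))"
    using Dmax_cont[OF conjunct1[OF cand_ok[OF z ab]]] by auto
  have c2: "continuous_on {a..b} (\<lambda>x. fst (cand a b m z (0, 1) x))" "continuous_on {a..b} (\<lambda>x. snd (cand a b m z (0, 1) x))"
    using Dmax_cont[OF conjunct1[OF cand_ok[OF z ab]]] by auto
  show "continuous_on {a..b} (\<lambda>x. fst (eta1 a b m z x))" "continuous_on {a..b} (\<lambda>x. snd (eta1 a b m z x))"
    "continuous_on {a..b} (\<lambda>x. fst (eta2 a b m z x))" "continuous_on {a..b} (\<lambda>x. snd (eta2 a b m z x))"
    using c1 c2 by (simp_all add: cand_def)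
qed

lemma L2_cont_int:
  assumes u: "L2fun a b u" and h: "continuous_on {a..b} h"
  shows "set_integrable lborel {a..b} (\<lambda>x. cnj (u x) * h x)"
proof -
  have "\<exists>B. \<forall>x\<in>{a..b}. norm (h x) \<le> B"
    using compact_imp_bounded[OF compact_continuous_image[OF h compact_Icc]]
    unfolding bounded_iff by auto
  then obtain B where B0: "\<forall>x\<in>{a..b}. norm (h x) \<le> B" by blast
  have B: "norm (h x) \<le> B" if "x \<in> {a..b}" for x using B0 that by blast
  have ui: "set_integrable lborel {a..b} u" by (rule L2fun_L1[OF u])
  have bi: "set_integrable lborel {a..b} (\<lambda>x. B *\<^sub>R u x)"
    using ui by (intro set_integrable_scaleR_right) auto
  have mu: "(\<lambda>x. indicator {a..b} x *\<^sub>R u x) \<in> borel_measurable lborel"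
    using u unfolding L2fun_def set_borel_measurable_def by blast
  have mh: "(\<lambda>x. indicator {a..b} x *\<^sub>R h x) \<in> borel_measurable lborel"
    using borel_measurable_continuous_on_indicator[OF _ h] by simp
  have mc: "(\<lambda>x. cnj (indicator {a..b} x *\<^sub>R u x)) \<in> borel_measurable lborel"
    by (rule borel_measurable_continuous_on[OF _ mu]) (intro continuous_intros)
  have eq: "(\<lambda>x. indicator {a..b} x *\<^sub>R (cnj (u x) * h x)) =
      (\<lambda>x. cnj (indicator {a..b} x *\<^sub>R u x) * (indicator {a..b} x *\<^sub>R h x))"
    by (rule ext) (simp split: split_indicator)
  have m: "set_borel_measurable lborel {a..b} (\<lambda>x. cnj (u x) * h x)"
    unfolding set_borel_measurable_def eq using mc mh by (rule borel_measurable_times)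
  show ?thesis
  proof (rule set_integrable_bound[OF bi m])
    show "AE x in lborel. x \<in> {a..b} \<longrightarrow> norm (cnj (u x) * h x) \<le> norm (B *\<^sub>R u x)"
    proof (rule AE_I2, rule impI)
      fix x assume x: "x \<in> {a..b}"
      have B0: "0 \<le> B" using B[OF x] norm_ge_zero order_trans by blast
      have "norm (cnj (u x) * h x) = norm (u x) * norm (h x)" by (simp add: norm_mult)
      also have "\<dots> \<le> norm (u x) * B" using B[OF x] by (intro mult_left_mono) auto
      also have "\<dots> = norm (B *\<^sub>R u x)" using B0 by simp
      finally show "norm (cnj (u x) * h x) \<le> norm (B *\<^sub>R u x)" .
    qed
  qed
qed

lemma L2inner_cnj: "L2inner a b \<eta> \<phi> = cnj (L2inner a b \<phi> \<eta>)"
proof -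
  let ?F = "\<lambda>x. indicator {a..b} x *\<^sub>R (cnj (fst (\<phi> x)) * fst (\<eta> x) + cnj (snd (\<phi> x)) * snd (\<eta> x))"
  have "cnj (integral\<^sup>L lborel ?F) = integral\<^sup>L lborel (\<lambda>x. cnj (?F x))"
    by (rule Bochner_Integration.integral_cnj[symmetric])
  also have "(\<lambda>x. cnj (?F x)) = (\<lambda>x. indicator {a..b} x *\<^sub>R (cnj (fst (\<eta> x)) * fst (\<phi> x) + cnj (snd (\<eta> x)) * snd (\<phi> x)))"
    by (rule ext) (simp split: split_indicator add: ac_simps)
  finally show ?thesis unfolding L2inner_def set_lebesgue_integral_def by simp
qed

lemma inner_gamma:
  assumes z: "z \<in> resolvent_D0 a b m" and ab: "a < b" and \<phi>: "L2vec a b \<phi>"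
  shows "L2inner a b \<phi> (gamma_field a b m z \<omega>) =
    fst \<omega> * L2inner a b \<phi> (eta1 a b m z) + snd \<omega> * L2inner a b \<phi> (eta2 a b m z)"
proof -
  note ec = eta_cont[OF z ab]
  have p1: "L2fun a b (\<lambda>x. fst (\<phi> x))" and p2: "L2fun a b (\<lambda>x. snd (\<phi> x))"
    using \<phi> unfolding L2vec_def by auto
  define F1 where "F1 x = cnj (fst (\<phi> x)) * fst (eta1 a b m z x) + cnj (snd (\<phi> x)) * snd (eta1 a b m z x)" for x
  define F2 where "F2 x = cnj (fst (\<phi> x)) * fst (eta2 a b m z x) + cnj (snd (\<phi> x)) * snd (eta2 a b m z x)" for x
  have i1: "set_integrable lborel {a..b} F1"
    unfolding F1_def by (intro set_integral_add(1) L2_cont_int p1 p2 ec)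
  have i2: "set_integrable lborel {a..b} F2"
    unfolding F2_def by (intro set_integral_add(1) L2_cont_int p1 p2 ec)
  have "L2inner a b \<phi> (gamma_field a b m z \<omega>) = (LINT x:{a..b}|lborel. fst \<omega> * F1 x + snd \<omega> * F2 x)"
    unfolding L2inner_def
  proof (rule set_lebesgue_integral_cong, simp, intro allI impI)
    fix x assume x: "x \<in> {a..b}"
    show "cnj (fst (\<phi> x)) * fst (gamma_field a b m z \<omega> x) + cnj (snd (\<phi> x)) * snd (gamma_field a b m z \<omega> x) =
          fst \<omega> * F1 x + snd \<omega> * F2 x"
      unfolding gamma_field_eq[OF z ab x] cand_def F1_def F2_def by (simp add: algebra_simps)
  qed
  also have "\<dots> = fst \<omega> * (LINT x:{a..b}|lborel. F1 x) + snd \<omega> * (LINT x:{a..b}|lborel. F2 x)"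
    using i1 i2 by (subst set_integral_add(2)) auto
  also have "\<dots> = fst \<omega> * L2inner a b \<phi> (eta1 a b m z) + snd \<omega> * L2inner a b \<phi> (eta2 a b m z)"
    unfolding L2inner_def F1_def F2_def ..
  finally show ?thesis .
qed

lemma gamma_adj_eq:
  assumes z: "z \<in> resolvent_D0 a b m" and ab: "a < b" and \<phi>: "L2vec a b \<phi>"
  shows "gamma_adj a b m z \<phi> = (L2inner a b (eta1 a b m z) \<phi>, L2inner a b (eta2 a b m z) \<phi>)"
proof -
  let ?v0 = "(L2inner a b (eta1 a b m z) \<phi>, L2inner a b (eta2 a b m z) \<phi>)"
  let ?P = "\<lambda>v. \<forall>\<omega>. C2inner v \<omega> = L2inner a b \<phi> (gamma_field a b m z \<omega>)"
  have "?P ?v0"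
    unfolding C2inner_def inner_gamma[OF z ab \<phi>] by (simp add: L2inner_cnj[of a b "eta1 a b m z"] L2inner_cnj[of a b "eta2 a b m z"] ac_simps)
  then have P: "?P (gamma_adj a b m z \<phi>)" unfolding gamma_adj_def by (rule someI[of ?P])
  define v where "v = gamma_adj a b m z \<phi>"
  have "C2inner v \<omega> = C2inner ?v0 \<omega>" for \<omega>
  proof -
    have e1: "C2inner v \<omega> = L2inner a b \<phi> (gamma_field a b m z \<omega>)" using P unfolding v_def by (rule spec)
    have e2: "C2inner ?v0 \<omega> = L2inner a b \<phi> (gamma_field a b m z \<omega>)" using \<open>?P ?v0\<close> by (rule spec)
    show ?thesis using e1 e2 by simp
  qed
  from this[of "(1, 0)"] this[of "(0, 1)"] have "cnj (fst v) = cnj (fst ?v0)" "cnj (snd v) = cnj (snd ?v0)"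
    by (simp_all add: C2inner_def)
  then have "v = ?v0" by (simp add: prod_eq_iff)
  then show ?thesis unfolding v_def .
qed

lemma Qfun_eq:
  assumes z: "z \<in> resolvent_D0 a b m" and ab: "a < b"
  shows "Qfun a b m z \<omega> = (\<i> * snd (cand a b m z \<omega> a), - \<i> * snd (cand a b m z \<omega> b))"
  unfolding Qfun_def Gamma2_def using ab
  by (simp add: gamma_field_eq[OF z ab])

theorem proposition3p6:
  fixes a b m :: real
  assumes "a < b" and "0 \<le> m"
  shows
    "(\<forall>z \<in> resolvent_D0 a b m. \<forall>\<omega>. \<forall>x \<in> {a..b}.
        gamma_field a b m z \<omega> x =
          (fst \<omega> * fst (eta1 a b m z x) + snd \<omega> * fst (eta2 a b m z x),
           fst \<omega> * snd (eta1 a b m z x) + snd \<omega> * snd (eta2 a b m z x)))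
   \<and> (\<forall>z \<in> resolvent_D0 a b m. \<forall>\<phi>. L2vec a b \<phi> \<longrightarrow>
        gamma_adj a b m z \<phi> = (L2inner a b (eta1 a b m z) \<phi>, L2inner a b (eta2 a b m z) \<phi>))
   \<and> (\<forall>z \<in> resolvent_D0 a b m - {of_real m}. \<forall>\<omega>.
        Qfun a b m z \<omega> =
          (let c = cos (kfun m z * of_real (b - a));
               s = - 1 / (alpha m z * sin (kfun m z * of_real (b - a)))
           in (s * (c * fst \<omega> - snd \<omega>), s * (- fst \<omega> + c * snd \<omega>))))
   \<and> (of_real m \<in> resolvent_D0 a b m \<longrightarrow> (\<forall>\<omega>.
        Qfun a b m (of_real m) \<omega> =
          (let s = - 1 / (2 * of_real m * of_real (b - a)) :: complex
           in (s * (fst \<omega> - snd \<omega>), s * (- fst \<omega> + snd \<omega>)))))"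
proof (intro conjI ballI allI impI)
  note ab = \<open>a < b\<close>
  show "gamma_field a b m z \<omega> x =
          (fst \<omega> * fst (eta1 a b m z x) + snd \<omega> * fst (eta2 a b m z x),
           fst \<omega> * snd (eta1 a b m z x) + snd \<omega> * snd (eta2 a b m z x))"
    if "z \<in> resolvent_D0 a b m" "x \<in> {a..b}" for z \<omega> x
    using gamma_field_eq[OF that(1) ab that(2)] by (simp add: cand_def)
  show "gamma_adj a b m z \<phi> = (L2inner a b (eta1 a b m z) \<phi>, L2inner a b (eta2 a b m z) \<phi>)"
    if "z \<in> resolvent_D0 a b m" "L2vec a b \<phi>" for z \<phi>
    by (rule gamma_adj_eq[OF that(1) ab that(2)])
  show "Qfun a b m z \<omega> =
          (let c = cos (kfun m z * of_real (b - a));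
               s = - 1 / (alpha m z * sin (kfun m z * of_real (b - a)))
           in (s * (c * fst \<omega> - snd \<omega>), s * (- fst \<omega> + c * snd \<omega>)))"
    if zz: "z \<in> resolvent_D0 a b m - {of_real m}" for z \<omega>
  proof -
    have z: "z \<in> resolvent_D0 a b m" and zm: "z \<noteq> of_real m" using zz by auto
    note f = res_facts[OF z ab zm]
    have al0: "alpha m z \<noteq> 0" using f(1) f(2) by (simp add: alpha_def)
    define s where "s = sin (kfun m z * of_real (b - a))"
    have s0: "s \<noteq> 0" using f(3) by (simp add: s_def)
    show ?thesis unfolding Qfun_eq[OF z ab] cand_def eta1_def eta2_def Let_def using zm
      using zm s0 al0 by (simp add: field_simps s_def del: of_real_diff)
  qed
  show "Qfun a b m (of_real m) \<omega> =
          (let s = - 1 / (2 * of_real m * of_real (b - a)) :: complex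
           in (s * (fst \<omega> - snd \<omega>), s * (- fst \<omega> + snd \<omega>)))"
    if z: "of_real m \<in> resolvent_D0 a b m" for \<omega>
  proof -
    have m0: "m \<noteq> 0" using res_not_minus[OF z ab] by auto
    have D: "complex_of_real (b - a) \<noteq> 0" using ab by simp
    show ?thesis unfolding Qfun_eq[OF z ab] cand_def eta1_def eta2_def Let_def
      by (simp only: if_True prod_eq_iff fst_conv snd_conv) (use D m0 in \<open>simp add: field_simps del: of_real_diff\<close>)
  qed
qed

end
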